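(* Let $a>1$ and $C_j(n,a)=\binom{n}{j}\left(\frac{1+a}{2}\right)^{n-j}\left(\frac{1-a}{2}\right)^j$. Then for every $z\in\mathbb{C}$, $$\lim_{n\to\infty}\sum_{j=0}^nC_j(n,a)\,e^{\frac{iz}{\sqrt2}(1-2j/n)-\frac14(1-2j/n)^2}=e^{\frac{iza}{\sqrt2}-\frac{a^2}{4}},$$ equivalently $\lim_{n\to\infty}\sum_{j=0}^nC_j(n,a)k_{b_j}(z)=k_{-ia/\sqrt2}(z)$ where $b_j=-\frac{i}{\sqrt2}(1-\frac{2j}{n})$.
   Context: For $w\in\mathbb{C}$, $k_w(z)=e^{z\overline{w}-|w|^2/2}$ denotes the normalized reproducing kernel of the Fock space. *)

theory Defs
  imports "HOL-Analysis.Analysis"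
begin

definition fock_kernel :: "complex \<Rightarrow> complex \<Rightarrow> complex" where
  "fock_kernel w z = exp (z * cnj w - of_real ((cmod w)^2 / 2))"

definition Ccoef :: "nat \<Rightarrow> nat \<Rightarrow> real \<Rightarrow> real" where
  "Ccoef j n a = real (n choose j) * ((1 + a) / 2) ^ (n - j) * ((1 - a) / 2) ^ j"

end

theory Submission
  imports Defs "HOL-Probability.Probability"
begin

lemma norm_exp_minus_1_le: "norm (exp (u::complex) - 1) \<le> exp (norm u) - 1"
proof -
  have s1: "(\<lambda>n. u^Suc n /\<^sub>R fact (Suc n)) sums (exp u - 1)"
    using exp_converges[of u] by (subst sums_Suc_iff) simp
  have s2: "(\<lambda>n. norm u^Suc n /\<^sub>R fact (Suc n)) sums (exp (norm u) - 1)"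
    using exp_converges[of "norm u"] by (subst sums_Suc_iff) simp
  have e: "(\<lambda>n. norm (u^Suc n /\<^sub>R fact (Suc n))) = (\<lambda>n. norm u^Suc n /\<^sub>R fact (Suc n))"
    by (simp add: norm_mult norm_power)
  have "norm (exp u - 1) = norm (\<Sum>n. u^Suc n /\<^sub>R fact (Suc n))"
    using s1 by (simp add: sums_iff)
  also have "\<dots> \<le> (\<Sum>n. norm (u^Suc n /\<^sub>R fact (Suc n)))"
    by (rule summable_norm) (use s2 e in \<open>auto simp: sums_iff\<close>)
  also have "\<dots> = exp (norm u) - 1" using s2 e by (simp add: sums_iff)
  finally show ?thesis .
qed

lemma exp_bern:
  fixes a r :: real assumes "a \<ge> 1" "r \<ge> 0"
  shows "1 + a * (exp r - 1) \<le> exp (a * r)"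
proof -
  let ?h = "\<lambda>r. exp (a * r) - a * exp r + a - 1"
  have "?h 0 \<le> ?h r"
  proof (rule DERIV_nonneg_imp_nondecreasing[OF assms(2)])
    fix x assume x0: "0 \<le> x" and x1: "x \<le> r"
    have x: "0 \<le> x \<and> x \<le> r" using x0 x1 by simp
    have "(?h has_real_derivative (a * exp (a * x) - a * exp x)) (at x)"
      by (auto intro!: derivative_eq_intros)
    moreover have "a * exp (a * x) - a * exp x \<ge> 0"
    proof -
      have "x \<le> a * x" using x assms by (metis mult_le_cancel_right1 not_less order_trans)
      hence "exp x \<le> exp (a*x)" by simp
      thus ?thesis using assms by simp
    qed
    ultimately show "\<exists>y. (?h has_real_derivative y) (at x) \<and> 0 \<le> y" by blast
  qed
  thus ?thesis by (simp add: algebra_simps)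
qed

lemma g_bound:
  fixes a :: real and u :: complex assumes "a \<ge> 1"
  shows "norm (of_real ((1+a)/2) * exp u + of_real ((1-a)/2) * exp (-u)) \<le> exp (a * norm u)"
proof -
  have eq: "of_real ((1+a)/2) * exp u + of_real ((1-a)/2) * exp (-u)
     = 1 + of_real ((1+a)/2) * (exp u - 1) + of_real ((1-a)/2) * (exp (-u) - 1)"
    by (simp add: algebra_simps add_divide_distrib diff_divide_distrib)
  have "norm (of_real ((1+a)/2) * exp u + of_real ((1-a)/2) * exp (-u))
     \<le> 1 + norm (of_real ((1+a)/2) * (exp u - 1)) + norm (of_real ((1-a)/2) * (exp (-u) - 1))"
    unfolding eq using norm_triangle_ineq[of "1 + of_real ((1+a)/2) * (exp u - 1)" "of_real ((1-a)/2) * (exp (-u) - 1)"]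
      norm_triangle_ineq[of "1::complex" "of_real ((1+a)/2) * (exp u - 1)"] by simp
  also have "\<dots> \<le> 1 + ((1+a)/2) * (exp (norm u) - 1) + ((a-1)/2) * (exp (norm u) - 1)"
  proof -
    have "norm (of_real ((1+a)/2) * (exp u - 1)) \<le> ((1+a)/2) * (exp (norm u) - 1)"
    proof -
      have "norm (complex_of_real ((1+a)/2) * (exp u - 1)) = ((1+a)/2) * norm (exp u - 1)"
        by (subst norm_mult, subst norm_of_real) (use assms in simp)
      thus ?thesis using assms norm_exp_minus_1_le[of u] by (simp add: mult_left_mono)
    qed
    moreover have "norm (of_real ((1-a)/2) * (exp (-u) - 1)) \<le> ((a-1)/2) * (exp (norm u) - 1)"
    proof -
      have "norm (complex_of_real ((1-a)/2) * (exp (-u) - 1)) = ((a-1)/2) * norm (exp (-u) - 1)"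
        by (subst norm_mult, subst norm_of_real) (use assms in simp)
      thus ?thesis using assms norm_exp_minus_1_le[of "-u"] by (simp add: mult_left_mono)
    qed
    ultimately show ?thesis by simp
  qed
  also have "\<dots> = 1 + a * (exp (norm u) - 1)" by (simp add: field_simps)
  also have "\<dots> \<le> exp (a * norm u)" by (rule exp_bern) (use assms in auto)
  finally show ?thesis .
qed

lemma g_limit:
  fixes a :: real and w :: complex
  shows "(\<lambda>n. (of_real ((1+a)/2) * exp (w / of_nat n) + of_real ((1-a)/2) * exp (- (w / of_nat n)))^n)
     \<longlonglongrightarrow> exp (of_real a * w)"
proof -
  define F where "F h = of_real ((1+a)/2) * exp h + of_real ((1-a)/2) * exp (-h)" for h :: complex
  have F0: "F 0 = 1" unfolding F_def by (simp add: field_simps)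
  show ?thesis
  proof (cases "w = 0")
    case True then show ?thesis using F0 by (simp add: F_def)
  next
    case False
    have dF: "(F has_field_derivative of_real a) (at 0)"
      unfolding F_def
      apply (rule derivative_eq_intros refl)+
      apply (simp add: field_simps)
      done
    have dLn: "(Ln has_field_derivative inverse (F 0)) (at (F 0))"
      using F0 has_field_derivative_Ln[of 1] by simp
    have dL: "((\<lambda>h. Ln (F h)) has_field_derivative (inverse (F 0) * of_real a)) (at 0)"
      by (rule DERIV_chain2[OF dLn dF])
    hence "((\<lambda>h. (Ln (F h) - Ln (F 0)) / (h - 0)) \<longlongrightarrow> inverse (F 0) * of_real a) (at 0)"
      by (simp add: has_field_derivative_iff)
    hence lim1: "((\<lambda>h. Ln (F h) / h) \<longlongrightarrow> of_real a) (at 0)" using F0 by simp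
    have t0: "(\<lambda>n. w / of_nat n) \<longlonglongrightarrow> 0" by (rule lim_const_over_n)
    have hlim: "filterlim (\<lambda>n. w / of_nat n) (at 0) sequentially"
      unfolding filterlim_at
    proof
      show "\<forall>\<^sub>F n in sequentially. w / of_nat n \<in> UNIV \<and> w / of_nat n \<noteq> 0"
        using False eventually_gt_at_top[of "0::nat"] by (auto elim!: eventually_mono)
    qed (rule t0)
    have lim2: "(\<lambda>n. Ln (F (w / of_nat n)) / (w / of_nat n)) \<longlonglongrightarrow> of_real a"
      by (rule filterlim_compose[OF lim1 hlim])
    hence lim3: "(\<lambda>n. w * (Ln (F (w / of_nat n)) / (w / of_nat n))) \<longlonglongrightarrow> w * of_real a"
      by (intro tendsto_mult tendsto_const)
    have ev1: "\<forall>\<^sub>F n in sequentially. w * (Ln (F (w / of_nat n)) / (w / of_nat n)) = of_nat n * Ln (F (w / of_nat n))"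
      using eventually_gt_at_top[of "0::nat"] by eventually_elim (use False in \<open>simp add: field_simps\<close>)
    have lim4: "(\<lambda>n. of_nat n * Ln (F (w / of_nat n))) \<longlonglongrightarrow> w * of_real a"
      using Lim_transform_eventually[OF lim3 ev1] .
    have lim5: "(\<lambda>n. exp (of_nat n * Ln (F (w / of_nat n)))) \<longlonglongrightarrow> exp (w * of_real a)"
      by (intro tendsto_exp lim4)
    have "isCont F 0" unfolding F_def by (intro continuous_intros)
    hence "(\<lambda>n. F (w / of_nat n)) \<longlonglongrightarrow> F 0" using t0 isCont_tendsto_compose by blast
    hence "\<forall>\<^sub>F n in sequentially. F (w / of_nat n) \<noteq> 0"
      using F0 tendsto_imp_eventually_ne by fastforce
    hence ev2: "\<forall>\<^sub>F n in sequentially. exp (of_nat n * Ln (F (w / of_nat n))) = F (w / of_nat n) ^ n"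
      by eventually_elim (simp add: exp_of_nat_mult)
    have "(\<lambda>n. F (w / of_nat n) ^ n) \<longlonglongrightarrow> exp (w * of_real a)"
      using Lim_transform_eventually[OF lim5 ev2] .
    thus ?thesis by (simp add: F_def mult.commute)
  qed
qed

lemma binom_exp:
  fixes w :: complex and a :: real assumes "n > 0"
  shows "(of_real ((1+a)/2) * exp (w / of_nat n) + of_real ((1-a)/2) * exp (- (w / of_nat n)))^n
    = (\<Sum>j=0..n. of_real (Ccoef j n a) * exp (of_real (1 - 2*real j/real n) * w))"
proof -
  have "(of_real ((1+a)/2) * exp (w / of_nat n) + of_real ((1-a)/2) * exp (- (w / of_nat n)))^n
     = (of_real ((1-a)/2) * exp (- (w / of_nat n)) + of_real ((1+a)/2) * exp (w / of_nat n))^n"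
    by (simp add: add.commute)
  also have "\<dots> = (\<Sum>k\<le>n. of_nat (n choose k) * (of_real ((1-a)/2) * exp (- (w / of_nat n)))^k
        * (of_real ((1+a)/2) * exp (w / of_nat n))^(n-k))"
    by (rule binomial_ring)
  also have "\<dots> = (\<Sum>j=0..n. of_real (Ccoef j n a) * exp (of_real (1 - 2*real j/real n) * w))"
    unfolding atLeast0AtMost
  proof (rule sum.cong[OF refl])
    fix k assume "k \<in> {..n}"
    hence k: "k \<le> n" by simp
    have arg: "of_real (1 - 2*real k/real n) * w = of_nat k * (-(w / of_nat n)) + of_nat (n-k) * (w / of_nat n)"
      using k assms by (simp add: of_nat_diff field_simps)
    have e3: "exp (of_real (1 - 2*real k/real n) * w) = exp (-(w / of_nat n))^k * exp (w / of_nat n)^(n-k)"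
      unfolding arg by (simp only: exp_add exp_of_nat_mult)
    show "of_nat (n choose k) * (of_real ((1-a)/2) * exp (- (w / of_nat n)))^k
        * (of_real ((1+a)/2) * exp (w / of_nat n))^(n-k) = of_real (Ccoef k n a) * exp (of_real (1 - 2*real k/real n) * w)"
      unfolding e3 Ccoef_def of_real_mult of_real_power power_mult_distrib
      by (simp add: mult_ac)
  qed
  finally show ?thesis .
qed

lemma integrable_exp_sq4: "integrable std_normal_distribution (\<lambda>y. exp (y^2/4))"
proof -
  have eq: "std_normal_density y * exp (y^2/4) = sqrt 2 * normal_density 0 (sqrt 2) y" for y :: real
  proof -
    have 1: "exp (- (y^2) / 2) * exp (y^2/4) = exp (- (y^2)/4)"
      by (subst exp_add[symmetric]) (simp add: field_simps)
    have 2: "sqrt (2*pi*(sqrt 2)^2) = sqrt 2 * sqrt (2*pi)"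
      by (simp add: real_sqrt_mult[symmetric])
    have "std_normal_density y * exp (y^2/4) = 1 / sqrt (2*pi) * (exp (- (y^2) / 2) * exp (y^2/4))"
      by (simp add: normal_density_def)
    also have "\<dots> = 1 / sqrt (2*pi) * exp (- (y^2)/4)" by (simp only: 1)
    also have "\<dots> = sqrt 2 * (1 / sqrt (2*pi*(sqrt 2)^2) * exp (- (y^2)/4))" unfolding 2 by simp
    also have "\<dots> = sqrt 2 * normal_density 0 (sqrt 2) y" by (simp add: normal_density_def)
    finally show ?thesis .
  qed
  show ?thesis
    apply (subst integrable_density)
    apply (simp_all add: eq normal_density_nonneg)
    done
qed

theorem corollary3p10:
  fixes a :: real and z :: complex
  assumes "a > 1"
  shows "(\<lambda>n. \<Sum>j = 0..n. complex_of_real (Ccoef j n a) *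
            exp (\<i> * z / complex_of_real (sqrt 2) * complex_of_real (1 - 2 * real j / real n)
                 - complex_of_real ((1 - 2 * real j / real n)^2 / 4)))
         \<longlonglongrightarrow> exp (\<i> * z * complex_of_real a / complex_of_real (sqrt 2) - complex_of_real (a^2 / 4))"
proof -
  define N where "N = std_normal_distribution"
  interpret N: real_distribution N unfolding N_def by (rule real_dist_normal_dist)
  define W where "W y = \<i> * (z + of_real y) / of_real (sqrt 2)" for y :: real
  define p where "p = (1+a)/2"
  define q where "q = (1-a)/2"
  define G where "G n y = (of_real p * exp (W y / of_nat n) + of_real q * exp (- (W y / of_nat n)))^n" for n y
  have measW: "(\<lambda>y. f (W y)) \<in> borel_measurable N" if "continuous_on UNIV f" for f :: "complex \<Rightarrow> complex"
  proof -
    have "continuous_on UNIV (\<lambda>y. f (W y))" unfolding W_def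
      by (intro continuous_on_compose2[OF that] continuous_intros) auto
    hence "(\<lambda>y. f (W y)) \<in> borel_measurable borel" by (rule borel_measurable_continuous_onI)
    thus ?thesis unfolding N_def by simp
  qed
  have intE: "integrable N (\<lambda>y. exp (of_real x * W y))" for x :: real
  proof (rule N.integrable_const_bound[where B="exp (\<bar>x\<bar> * norm z)"])
    show "(\<lambda>y. exp (of_real x * W y)) \<in> borel_measurable N"
      by (rule measW) (intro continuous_intros)
    have "norm (exp (of_real x * W y)) \<le> exp (\<bar>x\<bar> * norm z)" for y
    proof -
      have "Re (of_real x * W y) = - x * Im z / sqrt 2" by (simp add: W_def)
      also have "\<dots> \<le> \<bar>x * Im z\<bar> / sqrt 2" by (intro divide_right_mono) auto
      also have "\<dots> \<le> \<bar>x * Im z\<bar>" using divide_left_mono[of 1 "sqrt 2" "\<bar>x * Im z\<bar>"] by simp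
      also have "\<dots> \<le> \<bar>x\<bar> * norm z" by (simp add: abs_mult abs_Im_le_cmod mult_left_mono)
      finally show ?thesis by simp
    qed
    thus "AE y in N. norm (exp (of_real x * W y)) \<le> exp (\<bar>x\<bar> * norm z)" by simp
  qed
  have K: "integral\<^sup>L N (\<lambda>y. exp (of_real x * W y)) =
     exp (\<i> * z / complex_of_real (sqrt 2) * complex_of_real x - complex_of_real (x^2 / 4))" for x :: real
  proof -
    have e: "exp (of_real x * W y) = exp (\<i> * z / complex_of_real (sqrt 2) * complex_of_real x) * iexp (x / sqrt 2 * y)" for y
    proof -
      have "of_real x * W y = \<i> * z / complex_of_real (sqrt 2) * complex_of_real x + \<i> * complex_of_real (x / sqrt 2 * y)"
        by (simp add: W_def field_simps)
      thus ?thesis by (simp add: exp_add)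
    qed
    have "integral\<^sup>L N (\<lambda>y. exp (of_real x * W y)) = exp (\<i> * z / complex_of_real (sqrt 2) * complex_of_real x) * char N (x / sqrt 2)"
      unfolding e char_def by simp
    also have "char N (x / sqrt 2) = of_real (exp (- (x^2/4)))"
      unfolding N_def char_std_normal_distribution by (simp add: power_divide)
    also have "exp (\<i> * z / complex_of_real (sqrt 2) * complex_of_real x) * of_real (exp (- (x^2/4))) =
       exp (\<i> * z / complex_of_real (sqrt 2) * complex_of_real x - complex_of_real (x^2 / 4))"
      by (simp only: exp_diff of_real_inverse exp_of_real[symmetric] of_real_minus exp_minus divide_inverse)
    finally show ?thesis .
  qed
  have S_eq: "\<forall>\<^sub>F n in sequentially. integral\<^sup>L N (G n) = (\<Sum>j = 0..n. complex_of_real (Ccoef j n a) *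
            exp (\<i> * z / complex_of_real (sqrt 2) * complex_of_real (1 - 2 * real j / real n)
                 - complex_of_real ((1 - 2 * real j / real n)^2 / 4)))"
    using eventually_gt_at_top[of "0::nat"]
  proof eventually_elim
    fix n :: nat assume n: "n > 0"
    have "integral\<^sup>L N (G n) = integral\<^sup>L N (\<lambda>y. \<Sum>j=0..n. of_real (Ccoef j n a) * exp (of_real (1 - 2*real j/real n) * W y))"
      unfolding G_def p_def q_def using binom_exp[OF n] by simp
    also have "\<dots> = (\<Sum>j=0..n. of_real (Ccoef j n a) * integral\<^sup>L N (\<lambda>y. exp (of_real (1 - 2*real j/real n) * W y)))"
    proof -
      have ii: "\<And>j. j \<in> {0..n} \<Longrightarrow> integrable N (\<lambda>y. of_real (Ccoef j n a) * exp (of_real (1 - 2*real j/real n) * W y))"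
        by (intro integrable_mult_right intE)
      show ?thesis
        by (subst Bochner_Integration.integral_sum[OF ii]) (simp_all del: of_real_diff of_real_divide)
    qed
    also have "\<dots> = (\<Sum>j = 0..n. complex_of_real (Ccoef j n a) *
            exp (\<i> * z / complex_of_real (sqrt 2) * complex_of_real (1 - 2 * real j / real n)
                 - complex_of_real ((1 - 2 * real j / real n)^2 / 4)))"
      by (simp only: K)
    finally show "integral\<^sup>L N (G n) = (\<Sum>j = 0..n. complex_of_real (Ccoef j n a) *
            exp (\<i> * z / complex_of_real (sqrt 2) * complex_of_real (1 - 2 * real j / real n)
                 - complex_of_real ((1 - 2 * real j / real n)^2 / 4)))" .
  qed
  have lim: "(\<lambda>n. integral\<^sup>L N (G n)) \<longlonglongrightarrow> integral\<^sup>L N (\<lambda>y. exp (of_real a * W y))"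
  proof (rule integral_dominated_convergence[where w="\<lambda>y. exp (a * norm z + a^2) * exp (y^2/4)"])
    show "(\<lambda>y. exp (of_real a * W y)) \<in> borel_measurable N" by (rule measW) (intro continuous_intros)
    show "G n \<in> borel_measurable N" for n
    proof -
      have "G n = (\<lambda>y. (\<lambda>w. (of_real p * exp (w * inverse (of_nat n)) + of_real q * exp (- (w * inverse (of_nat n))))^n) (W y))"
        by (simp add: G_def divide_inverse fun_eq_iff)
      also have "\<dots> \<in> borel_measurable N" by (rule measW) (intro continuous_intros)
      finally show ?thesis .
    qed
    have "integrable N (\<lambda>y. exp (y^2/4))" unfolding N_def by (rule integrable_exp_sq4)
    thus "integrable N (\<lambda>y. exp (a * norm z + a^2) * exp (y^2/4))" by (rule integrable_mult_right)
    show "AE y in N. (\<lambda>n. G n y) \<longlonglongrightarrow> exp (of_real a * W y)"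
      using g_limit unfolding G_def p_def q_def by simp
    show "AE y in N. norm (G n y) \<le> exp (a * norm z + a^2) * exp (y^2/4)" for n
    proof (rule AE_I2)
      fix y
      have nW: "norm (W y) \<le> norm z + \<bar>y\<bar>"
      proof -
        have "norm (W y) = norm (z + of_real y) / sqrt 2" by (simp add: W_def norm_divide norm_mult)
        also have "\<dots> \<le> norm (z + of_real y)" using divide_left_mono[of 1 "sqrt 2" "norm (z + of_real y)"] by simp
        also have "\<dots> \<le> norm z + \<bar>y\<bar>" using norm_triangle_ineq[of z "of_real y"] by simp
        finally show ?thesis .
      qed
      have "norm (G n y) = norm (of_real p * exp (W y / of_nat n) + of_real q * exp (- (W y / of_nat n)))^n"
        by (simp add: G_def norm_power)
      also have "\<dots> \<le> exp (a * norm (W y / of_nat n))^n"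
        unfolding p_def q_def by (rule power_mono[OF g_bound]) (use assms in auto)
      also have "\<dots> = exp (real n * (a * norm (W y / of_nat n)))" by (simp add: exp_of_nat_mult)
      also have "\<dots> \<le> exp (a * norm (W y))"
      proof (cases "n = 0")
        case True thus ?thesis using assms by simp
      next
        case False thus ?thesis by (simp add: norm_divide)
      qed
      also have "\<dots> \<le> exp (a * norm z + a^2) * exp (y^2/4)"
      proof -
        have "a * norm (W y) \<le> a * (norm z + \<bar>y\<bar>)" using nW assms by (intro mult_left_mono) auto
        also have "\<dots> \<le> a * norm z + a^2 + y^2/4"
        proof -
          have "0 \<le> (a - \<bar>y\<bar>/2)^2" by simp
          hence "a * \<bar>y\<bar> \<le> a^2 + \<bar>y\<bar>^2/4" by (simp add: power2_eq_square field_simps)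
          thus ?thesis by (simp add: algebra_simps)
        qed
        finally show ?thesis by (simp add: exp_add[symmetric])
      qed
      finally show "norm (G n y) \<le> exp (a * norm z + a^2) * exp (y^2/4)" .
    qed

  qed
  show ?thesis
  proof -
    have c: "\<i> * z / complex_of_real (sqrt 2) * complex_of_real a = \<i> * z * complex_of_real a / complex_of_real (sqrt 2)"
      by (simp add: mult_ac)
    have "integral\<^sup>L N (\<lambda>y. exp (of_real a * W y)) =
      exp (\<i> * z * complex_of_real a / complex_of_real (sqrt 2) - complex_of_real (a^2 / 4))"
      using K[of a] unfolding c .
    thus ?thesis using Lim_transform_eventually[OF lim S_eq] by (simp only:)
  qed
qed

end
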